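(* Let $f_\mu,f_\nu$ be nonnegative and continuous on $[-p,0]$ and $[-q,0]$ (and supported there). Define $F_\mu,F_\nu:\mathbb R^2\to\mathbb R$ by $F_\mu(t,s)=\int_{[-p\vee(s-t),\,s\wedge 0]}f_\mu(u)\,du$ and $F_\nu(t,s)=\int_{[-q\vee(s-t),\,s\wedge 0]}f_\nu(u)\,du$ (interpreted as $0$ when the interval is empty). Let $X$ be the unique strong solution of the CDGARCH variance equation and define $\Xi(X)_t:=\int_{[-p,t]}F_\mu(t,s)X_s\,ds+\int_{(-q,t]}F_\nu(t,s)X_{s-}\,dS_s$ for $t\ge 0$. Then: (a) $F_\mu$ and $F_\nu$ are nonnegative Lipschitz continuous functions on $\mathbb R^2$; (b) the process $(\Xi(X)_t)_{t\ge0}$ has (almost surely) locally Lipschitz continuous sample paths, with derivative $\xi(X)_t:=\frac{d}{dt}\Xi(X)_t=\int_{-p}^0 f_\mu(u)X_{t+u}\,du+\int_{-q+}^0 f_\nu(u)X_{t+u-}\,dS_{t+u}$ for Lebesgue almost every $t\ge 0$.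
   Context: Let $p,q\ge 0$, $r:=p\vee q>0$, and $(\Omega,\mathcal F,\mathbb F=(\mathcal F_t)_{t\ge -r},\mathbb P)$ a filtered probability space with the usual conditions, supporting a càdlàg adapted centered square-integrable Lévy process $(L_t)_{t\ge -r}$, $L_{-r}=0$, with independent stationary increments relative to $\mathbb F$; $S=[L,L]$ is its quadratic variation, $S_t=\sigma_L^2(t+r)+\sum_{-r<s\le t}(\Delta L_s)^2$. Assume $\mathbb E[L_1^4]<\infty$. Parameters: $\eta>0$, $c_\mu,c_\nu>0$, $\mu(E)=\int_{E\cap[-p,0]}f_\mu-c_\mu\delta_0(E)$, $\nu(E)=\int_{E\cap[-q,0]}f_\nu+c_\nu\delta_0(E)$. The initial process $\Phi$ is càdlàg on $[-r,0]$, adapted to the natural filtration of $L$, with $\mathbb E[\sup_{s\in[-r,0]}|\Phi_s|^2]<\infty$; extend $\Phi_t=\Phi_0$ for $t>0$ and let $\theta_t=\Phi_t+\eta t\mathbf 1_{[0,\infty)}(t)$. The CDGARCH variance equation is $X_t=\theta_t+\int_{-p}^0\int_u^{t+u}X_s\,ds\,\mu(du)+\int_{-q}^0\int_{u+}^{t+u}X_{s-}\,dS_s\,\nu(du)$, $t\ge0$, $X=\Phi$ on $[-r,0]$; its unique strong solution is the unique adapted càdlàg process $X$ on $[-r,\infty)$ with $\mathbb E[\sup_{s\in[-r,t]}|X_s|^2]<\infty$ for all $t$ satisfying it. *)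

theory Defs
  imports "HOL-Probability.Probability"
begin

definition left_lim :: "(real \<Rightarrow> real) \<Rightarrow> real \<Rightarrow> real" where
  "left_lim g t = Lim (at_left t) g"

definition cadlag_from :: "real \<Rightarrow> (real \<Rightarrow> real) \<Rightarrow> bool" where
  "cadlag_from a g \<longleftrightarrow>
     (\<forall>t\<ge>a. (g \<longlongrightarrow> g t) (at_right t)) \<and>
     (\<forall>t>a. \<exists>l. (g \<longlongrightarrow> l) (at_left t))"

definition cadlag_on_interval :: "real \<Rightarrow> real \<Rightarrow> (real \<Rightarrow> real) \<Rightarrow> bool" where
  "cadlag_on_interval a b g \<longleftrightarrow>
     (\<forall>t\<in>{a..<b}. (g \<longlongrightarrow> g t) (at_right t)) \<and>
     (\<forall>t\<in>{a<..b}. \<exists>l. (g \<longlongrightarrow> l) (at_left t))"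

definition LS_measure :: "real \<Rightarrow> (real \<Rightarrow> real) \<Rightarrow> real measure" where
  "LS_measure a g = interval_measure (\<lambda>\<tau>. g (max \<tau> a))"

definition filtration_usual :: "'a measure \<Rightarrow> real \<Rightarrow> (real \<Rightarrow> 'a measure) \<Rightarrow> bool" where
  "filtration_usual M r F \<longleftrightarrow>
     (\<forall>t\<ge>-r. space (F t) = space M \<and> sets (F t) \<subseteq> sets M) \<and>
     (\<forall>s t. -r \<le> s \<and> s \<le> t \<longrightarrow> sets (F s) \<subseteq> sets (F t)) \<and>
     (\<forall>N\<in>null_sets M. \<forall>B. B \<subseteq> N \<longrightarrow> B \<in> sets M) \<and>
     (\<forall>N\<in>null_sets M. N \<in> sets (F (-r))) \<and>
     (\<forall>t\<ge>-r. sets (F t) = (\<Inter>s\<in>{t<..}. sets (F s)))"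

definition adapted_from :: "real \<Rightarrow> (real \<Rightarrow> 'a measure) \<Rightarrow> (real \<Rightarrow> 'a \<Rightarrow> real) \<Rightarrow> bool" where
  "adapted_from r F X \<longleftrightarrow> (\<forall>t\<ge>-r. X t \<in> borel_measurable (F t))"

definition levy_process :: "'a measure \<Rightarrow> real \<Rightarrow> (real \<Rightarrow> 'a measure) \<Rightarrow> (real \<Rightarrow> 'a \<Rightarrow> real) \<Rightarrow> bool" where
  "levy_process M r F L \<longleftrightarrow>
     adapted_from r F L \<and>
     (\<forall>\<omega>\<in>space M. cadlag_from (-r) (\<lambda>t. L t \<omega>)) \<and>
     (\<forall>\<omega>\<in>space M. L (-r) \<omega> = 0) \<and>
     (\<forall>t\<ge>-r. integrable M (L t) \<and> (\<integral>\<omega>. L t \<omega> \<partial>M) = 0 \<and> integrable M (\<lambda>\<omega>. (L t \<omega>)\<^sup>2)) \<and>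
     (\<forall>s t. -r \<le> s \<and> s \<le> t \<longrightarrow>
        (\<forall>A\<in>sets (F s). \<forall>B\<in>sets borel.
           measure M (A \<inter> {\<omega>\<in>space M. L t \<omega> - L s \<omega> \<in> B})
             = measure M A * measure M {\<omega>\<in>space M. L t \<omega> - L s \<omega> \<in> B})) \<and>
     (\<forall>s t s' t'. -r \<le> s \<and> s \<le> t \<and> -r \<le> s' \<and> s' \<le> t' \<and> t - s = t' - s' \<longrightarrow>
        distr M borel (\<lambda>\<omega>. L t \<omega> - L s \<omega>) = distr M borel (\<lambda>\<omega>. L t' \<omega> - L s' \<omega>))"

definition dyadic_qv_sum :: "real \<Rightarrow> (real \<Rightarrow> 'a \<Rightarrow> real) \<Rightarrow> nat \<Rightarrow> real \<Rightarrow> 'a \<Rightarrow> real" where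
  "dyadic_qv_sum r L n t \<omega> =
     (\<Sum>k<2^n. (L (-r + real (Suc k) * (t + r) / 2^n) \<omega> - L (-r + real k * (t + r) / 2^n) \<omega>)\<^sup>2)"

definition quadratic_variation :: "'a measure \<Rightarrow> real \<Rightarrow> (real \<Rightarrow> 'a \<Rightarrow> real) \<Rightarrow> (real \<Rightarrow> 'a \<Rightarrow> real) \<Rightarrow> bool" where
  "quadratic_variation M r L S \<longleftrightarrow>
     (\<forall>t\<ge>-r. S t \<in> borel_measurable M) \<and>
     (\<forall>\<omega>\<in>space M. cadlag_from (-r) (\<lambda>t. S t \<omega>)) \<and>
     (\<forall>t\<ge>-r. \<forall>\<epsilon>>0.
        (\<lambda>n. measure M {\<omega>\<in>space M. \<bar>dyadic_qv_sum r L n t \<omega> - S t \<omega>\<bar> > \<epsilon>}) \<longlonglongrightarrow> 0)"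

definition natural_filtration :: "'a measure \<Rightarrow> real \<Rightarrow> (real \<Rightarrow> 'a \<Rightarrow> real) \<Rightarrow> real \<Rightarrow> 'a measure" where
  "natural_filtration M r L t =
     sigma (space M) {L s -` B \<inter> space M | s B. -r \<le> s \<and> s \<le> t \<and> B \<in> sets borel}"

definition initial_process :: "'a measure \<Rightarrow> real \<Rightarrow> (real \<Rightarrow> 'a \<Rightarrow> real) \<Rightarrow> (real \<Rightarrow> 'a \<Rightarrow> real) \<Rightarrow> bool" where
  "initial_process M r L \<Phi> \<longleftrightarrow>
     (\<forall>\<omega>\<in>space M. cadlag_on_interval (-r) 0 (\<lambda>t. \<Phi> t \<omega>)) \<and>
     (\<forall>t\<in>{-r..0}. \<Phi> t \<in> borel_measurable (natural_filtration M r L t)) \<and>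
     (\<integral>\<^sup>+\<omega>. (SUP s\<in>{-r..0}. ennreal ((\<Phi> s \<omega>)\<^sup>2)) \<partial>M) < \<infinity>"

(* right-hand side of the CDGARCH variance equation at time t >= 0, with the measures
   mu = f_mu on [-p,0] minus c_mu delta_0, nu = f_nu on [-q,0] plus c_nu delta_0 written out,
   theta_t = Phi_0 + eta t, and the dS-integrals as pathwise Lebesgue--Stieltjes integrals *)
definition cdgarch_rhs ::
  "real \<Rightarrow> real \<Rightarrow> real \<Rightarrow> real \<Rightarrow> real \<Rightarrow> real \<Rightarrow> (real \<Rightarrow> real) \<Rightarrow> (real \<Rightarrow> real)
   \<Rightarrow> (real \<Rightarrow> 'a \<Rightarrow> real) \<Rightarrow> (real \<Rightarrow> 'a \<Rightarrow> real) \<Rightarrow> (real \<Rightarrow> 'a \<Rightarrow> real) \<Rightarrow> real \<Rightarrow> 'a \<Rightarrow> real" where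
  "cdgarch_rhs p q r \<eta> c\<mu> c\<nu> f\<mu> f\<nu> S \<Phi> X t \<omega> =
     \<Phi> 0 \<omega> + \<eta> * t
     + (LINT u:{-p..0}|lborel. f\<mu> u * (LINT s:{u..t+u}|lborel. X s \<omega>))
     - c\<mu> * (LINT s:{0..t}|lborel. X s \<omega>)
     + (LINT u:{-q..0}|lborel. f\<nu> u *
           (LINT s:{u<..t+u}|LS_measure (-r) (\<lambda>\<tau>. S \<tau> \<omega>). left_lim (\<lambda>\<tau>. X \<tau> \<omega>) s))
     + c\<nu> * (LINT s:{0<..t}|LS_measure (-r) (\<lambda>\<tau>. S \<tau> \<omega>). left_lim (\<lambda>\<tau>. X \<tau> \<omega>) s)"

definition cdgarch_strong_solution ::
  "'a measure \<Rightarrow> (real \<Rightarrow> 'a measure) \<Rightarrow> real \<Rightarrow> real \<Rightarrow> real \<Rightarrow> real \<Rightarrow> real \<Rightarrow> real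
   \<Rightarrow> (real \<Rightarrow> real) \<Rightarrow> (real \<Rightarrow> real) \<Rightarrow> (real \<Rightarrow> 'a \<Rightarrow> real) \<Rightarrow> (real \<Rightarrow> 'a \<Rightarrow> real)
   \<Rightarrow> (real \<Rightarrow> 'a \<Rightarrow> real) \<Rightarrow> bool" where
  "cdgarch_strong_solution M F p q r \<eta> c\<mu> c\<nu> f\<mu> f\<nu> S \<Phi> X \<longleftrightarrow>
     adapted_from r F X \<and>
     (\<forall>\<omega>\<in>space M. cadlag_from (-r) (\<lambda>t. X t \<omega>)) \<and>
     (\<forall>t\<ge>-r. (\<integral>\<^sup>+\<omega>. (SUP s\<in>{-r..t}. ennreal ((X s \<omega>)\<^sup>2)) \<partial>M) < \<infinity>) \<and>
     (\<forall>\<omega>\<in>space M. \<forall>t\<in>{-r..0}. X t \<omega> = \<Phi> t \<omega>) \<and>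
     (AE \<omega> in M. \<forall>t\<ge>0. X t \<omega> = cdgarch_rhs p q r \<eta> c\<mu> c\<nu> f\<mu> f\<nu> S \<Phi> X t \<omega>)"

definition Fker :: "real \<Rightarrow> (real \<Rightarrow> real) \<Rightarrow> real \<Rightarrow> real \<Rightarrow> real" where
  "Fker p f t s = (LINT u:{max (-p) (s - t)..min s 0}|lborel. f u)"

definition Xi ::
  "real \<Rightarrow> real \<Rightarrow> real \<Rightarrow> (real \<Rightarrow> real) \<Rightarrow> (real \<Rightarrow> real) \<Rightarrow> (real \<Rightarrow> 'a \<Rightarrow> real)
   \<Rightarrow> (real \<Rightarrow> 'a \<Rightarrow> real) \<Rightarrow> real \<Rightarrow> 'a \<Rightarrow> real" where
  "Xi p q r f\<mu> f\<nu> S X t \<omega> =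
     (LINT s:{-p..t}|lborel. Fker p f\<mu> t s * X s \<omega>)
     + (LINT s:{-q<..t}|LS_measure (-r) (\<lambda>\<tau>. S \<tau> \<omega>). Fker q f\<nu> t s * left_lim (\<lambda>\<tau>. X \<tau> \<omega>) s)"

(* xi(X)_t; the integrator dS_{t+u} is the Lebesgue--Stieltjes measure of u |-> S_{t+u} *)
definition xi ::
  "real \<Rightarrow> real \<Rightarrow> real \<Rightarrow> (real \<Rightarrow> real) \<Rightarrow> (real \<Rightarrow> real) \<Rightarrow> (real \<Rightarrow> 'a \<Rightarrow> real)
   \<Rightarrow> (real \<Rightarrow> 'a \<Rightarrow> real) \<Rightarrow> real \<Rightarrow> 'a \<Rightarrow> real" where
  "xi p q r f\<mu> f\<nu> S X t \<omega> =
     (LINT u:{-p..0}|lborel. f\<mu> u * X (t + u) \<omega>)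
     + (LINT u:{-q<..0}|LS_measure (-r - t) (\<lambda>u. S (t + u) \<omega>). f\<nu> u * left_lim (\<lambda>\<tau>. X \<tau> \<omega>) (t + u))"

end

theory Submission
  imports Defs
begin


lemma interval_measure_nonmono:
  fixes F :: "real \<Rightarrow> real"
  assumes xy: "x \<le> y" "F y < F x"
  shows "emeasure (interval_measure F) A = 0"
proof -
  define I where "I = {(a, b). (a::real) \<le> b}"
  define G where "G = (\<lambda>(a,b). {a<..b::real})"
  define \<mu> where "\<mu> = (\<lambda>(a::real,b). ennreal (F b - F a))"
  have nex: "\<not> ((\<exists>\<mu>'. (\<forall>i\<in>I. \<mu>' (G i) = \<mu> i) \<and> measure_space UNIV (sigma_sets UNIV (G`I)) \<mu>') \<and> \<not> (\<forall>i\<in>I. \<mu> i = 0))"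
  proof
    assume "(\<exists>\<mu>'. (\<forall>i\<in>I. \<mu>' (G i) = \<mu> i) \<and> measure_space UNIV (sigma_sets UNIV (G`I)) \<mu>') \<and> \<not> (\<forall>i\<in>I. \<mu> i = 0)"
    then obtain \<mu>' a b where eq: "\<forall>i\<in>I. \<mu>' (G i) = \<mu> i" and ms: "measure_space UNIV (sigma_sets UNIV (G`I)) \<mu>'"
      and ab: "a \<le> b" "ennreal (F b - F a) \<noteq> 0"
      unfolding I_def \<mu>_def by auto
    from ab have ab': "F a < F b" by (simp add: ennreal_eq_0_iff)
    have m: "\<mu>' {u<..v} = ennreal (F v - F u)" if "u \<le> v" for u v
      using eq that unfolding I_def G_def \<mu>_def by auto
    have inS: "{u<..v} \<in> sigma_sets UNIV (G`I)" if "u \<le> v" for u v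
      using that unfolding I_def G_def by (intro sigma_sets.Basic) (auto intro!: image_eqI[where x="(u,v)"])
    interpret sigma_algebra UNIV "sigma_sets UNIV (G`I)"
      using ms by (simp add: measure_space_def)
    have addv: "additive (sigma_sets UNIV (G`I)) \<mu>'"
      using ms countably_additive_additive by (auto simp: measure_space_def)
    have add: "ennreal (F w - F u) = ennreal (F v - F u) + ennreal (F w - F v)" if "u \<le> v" "v \<le> w" for u v w
    proof -
      have "{u<..w} = {u<..v} \<union> {v<..w}" using that by auto
      have "\<mu>' {u<..w} = \<mu>' {u<..v} + \<mu>' {v<..w}"
      proof -
        have "{u<..v} \<inter> {v<..w} = {}" by auto
        moreover have "{u<..v} \<in> sigma_sets UNIV (G`I)" "{v<..w} \<in> sigma_sets UNIV (G`I)" using inS that by auto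
        ultimately show ?thesis using addv \<open>{u<..w} = _\<close> unfolding additive_def by metis
      qed
      then show ?thesis using m that by simp
    qed
    have e: "max (F w - F u) 0 = max (F v - F u) 0 + max (F w - F v) 0" if "u \<le> v" "v \<le> w" for u v w
    proof -
      have "ennreal (max (F w - F u) 0) = ennreal (max (F v - F u) 0 + max (F w - F v) 0)"
        using add[OF that] by (simp add: ennreal_max_0 ennreal_plus[symmetric])
      then show ?thesis by (subst (asm) ennreal_inj) auto
    qed
    define lo where "lo = min a x"
    define hi where "hi = max b y"
    have 1: "max (F hi - F lo) 0 = max (F a - F lo) 0 + max (F b - F a) 0 + max (F hi - F b) 0"
      using e[of lo a hi] e[of a b hi] ab unfolding lo_def hi_def by auto
    have 2: "max (F hi - F lo) 0 = max (F x - F lo) 0 + max (F y - F x) 0 + max (F hi - F y) 0"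
      using e[of lo x hi] e[of x y hi] xy ab unfolding lo_def hi_def by auto
    show False using 1 2 ab' xy by linarith
  qed
  have IM: "interval_measure F = measure_of UNIV (G`I) (\<lambda>_. 0)"
    using nex unfolding interval_measure_def extend_measure_def I_def G_def \<mu>_def by (simp only: if_False) 
  show ?thesis
  proof (cases "A \<in> sets (interval_measure F)")
    case True
    show ?thesis
      by (rule emeasure_measure_of[OF IM]) (use True in \<open>auto simp: positive_def countably_additive_def\<close>)
  next
    case False then show ?thesis by (simp add: emeasure_notin_sets)
  qed
qed

lemma interval_measure_Ioc_finite:
  fixes F :: "real \<Rightarrow> real"
  assumes rc: "\<And>a. continuous (at_right a) F"
  shows "emeasure (interval_measure F) {a<..b} < \<infinity>"
proof (cases "\<forall>x y. x \<le> y \<longrightarrow> F x \<le> F y")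
  case True
  then show ?thesis using emeasure_interval_measure_Ioc_eq[of F a b] rc by auto
next
  case False
  then obtain x y where "x \<le> y" "F y < F x" by force
  then show ?thesis using interval_measure_nonmono by simp
qed

lemma countable_atoms:
  fixes \<nu> :: "real measure"
  assumes sets: "sets \<nu> = sets borel" and fin: "\<And>a b. emeasure \<nu> {a<..b} < \<infinity>"
  shows "countable {x. emeasure \<nu> {x} \<noteq> 0}"
proof -
  have sp: "space \<nu> = UNIV" using sets_eq_imp_space_eq[OF sets] by simp
  define N where "N n = restrict_space \<nu> {-real n<..real n}" for n::nat
  have inS: "{-real n<..real n} \<in> sets \<nu>" for n using sets by simp
  have fm: "finite_measure (N n)" for n
  proof (rule finite_measureI)
    have "emeasure (N n) (space (N n)) = emeasure \<nu> {-real n<..real n}"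
      unfolding N_def using inS sp by (simp add: emeasure_restrict_space space_restrict_space)
    then show "emeasure (N n) (space (N n)) \<noteq> \<infinity>" using fin by (simp add: less_top)
  qed
  have "{x. emeasure \<nu> {x} \<noteq> 0} \<subseteq> (\<Union>n. {x. measure (N n) {x} \<noteq> 0})"
  proof
    fix x assume "x \<in> {x. emeasure \<nu> {x} \<noteq> 0}"
    then have ne: "emeasure \<nu> {x} \<noteq> 0" by simp
    obtain n :: nat where n: "\<bar>x\<bar> < real n" using reals_Archimedean2 by blast
    have xin: "{x} \<subseteq> {-real n<..real n}" using n by auto
    have "emeasure \<nu> {x} \<le> emeasure \<nu> {x-1<..x}"
      by (rule emeasure_mono) (auto simp: sets)
    then have fx: "emeasure \<nu> {x} < \<infinity>" using fin[of "x-1" x] by (meson order.strict_trans1)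
    have "measure (N n) {x} = measure \<nu> {x}"
      unfolding N_def using inS sp xin by (subst measure_restrict_space) auto
    moreover have "measure \<nu> {x} \<noteq> 0" using ne fx
      by (simp add: measure_def enn2real_eq_0_iff)
    ultimately show "x \<in> (\<Union>n. {x. measure (N n) {x} \<noteq> 0})" by (intro UN_I[of n]) auto
  qed
  moreover have "countable (\<Union>n. {x. measure (N n) {x} \<noteq> 0})"
    using finite_measure.countable_support[OF fm] by auto
  ultimately show ?thesis by (rule countable_subset)
qed

lemma interval_measure_shift:
  fixes F :: "real \<Rightarrow> real"
  assumes mono: "\<And>x y. x \<le> y \<Longrightarrow> F x \<le> F y" and rc: "\<And>a. continuous (at_right a) F"
  shows "interval_measure (\<lambda>u. F (t + u)) = distr (interval_measure F) borel (\<lambda>s. s - t)"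
proof -
  have mono': "\<And>x y. x \<le> y \<Longrightarrow> F (t + x) \<le> F (t + y)" using mono by simp
  have rc': "continuous (at_right a) (\<lambda>u. F (t + u))" for a
  proof -
    have "(F \<longlongrightarrow> F (a + t)) (at_right (a + t))"
      using rc[of "a+t"] by (simp add: continuous_within)
    then have "(F \<longlongrightarrow> F (a + t)) (filtermap (\<lambda>x. x - (-t)) (at_right a))"
      using filtermap_at_right_shift[of "-t" a] by simp
    then have "((\<lambda>x. F (x - (-t))) \<longlongrightarrow> F (a + t)) (at_right a)"
      by (simp add: filterlim_filtermap)
    then show ?thesis by (simp add: continuous_within add.commute)
  qed
  let ?E = "range (\<lambda>(a, b). {a<..b::real})"
  show ?thesis
  proof (rule measure_eqI_generator_eq[where E="?E" and \<Omega>=UNIV and A="\<lambda>i. {-real i<..real i}"])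
    show "Int_stable ?E"
      unfolding Int_stable_def
    proof (intro ballI)
      fix A B assume "A \<in> ?E" "B \<in> ?E"
      then obtain a b c d where "A = {a<..b}" "B = {c<..d}" by auto
      then have "A \<inter> B = {max a c<..min b d}" by auto
      then show "A \<inter> B \<in> ?E" by (auto intro!: image_eqI[where x="(max a c, min b d)"])
    qed
    show "?E \<subseteq> Pow UNIV" by auto
    show "sets (interval_measure (\<lambda>u. F (t + u))) = sigma_sets UNIV ?E"
      by (simp add: borel_sigma_sets_Ioc)
    show "sets (distr (interval_measure F) borel (\<lambda>s. s - t)) = sigma_sets UNIV ?E"
      by (simp add: borel_sigma_sets_Ioc)
    show "range (\<lambda>i. {-real i<..real i}) \<subseteq> ?E" by auto
    show "(\<Union>i. {-real i<..real i}) = UNIV"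
    proof -
      have "x \<in> (\<Union>i. {-real i<..real i})" for x :: real
      proof -
        obtain n :: nat where "\<bar>x\<bar> < real n" using reals_Archimedean2 by blast
        then show ?thesis by (intro UN_I[of n]) auto
      qed
      then show ?thesis by auto
    qed
    show "emeasure (interval_measure (\<lambda>u. F (t + u))) {-real i<..real i} \<noteq> \<infinity>" for i
      using interval_measure_Ioc_finite[OF rc'] by (simp add: less_top)
    show "emeasure (interval_measure (\<lambda>u. F (t + u))) X = emeasure (distr (interval_measure F) borel (\<lambda>s. s - t)) X"
      if "X \<in> ?E" for X
    proof -
      from that obtain a b where X: "X = {a<..b}" by auto
      have pre: "(\<lambda>s. s - t) -` {a<..b} = {a + t<..b + t}" by auto
      have "emeasure (distr (interval_measure F) borel (\<lambda>s. s - t)) X = emeasure (interval_measure F) {a + t<..b + t}"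
        unfolding X by (subst emeasure_distr) (auto simp: pre)
      also have "\<dots> = (if a \<le> b then F (t + b) - F (t + a) else 0)"
        using emeasure_interval_measure_Ioc_eq[of F "a+t" "b+t", OF mono rc] by (simp add: add.commute)
      also have "\<dots> = emeasure (interval_measure (\<lambda>u. F (t + u))) X"
        unfolding X using emeasure_interval_measure_Ioc_eq[of "\<lambda>u. F (t + u)" a b, OF mono' rc'] by simp
      finally show ?thesis by simp
    qed
  qed
qed




lemma rcont_borel_measurable:
  fixes h :: "real \<Rightarrow> real"
  assumes rc: "\<And>s. (h \<longlongrightarrow> h s) (at_right s)"
  shows "h \<in> borel_measurable borel"
proof -
  define c where "c n s = real_of_int \<lceil>real (Suc n) * s\<rceil> / real (Suc n)" for n s
  have meas: "(\<lambda>s. h (c n s)) \<in> borel_measurable borel" for n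
  proof -
    have "(\<lambda>s. (\<lambda>k::int. \<lambda>s. h (real_of_int k / real (Suc n))) \<lceil>real (Suc n) * s\<rceil> s) \<in> borel_measurable borel"
      by (rule measurable_compose_countable) (simp, measurable)
    then show ?thesis unfolding c_def by simp
  qed
  have conv: "(\<lambda>n. h (c n s)) \<longlonglongrightarrow> h s" for s
  proof -
    have c1: "s \<le> c n s" "c n s \<le> s + inverse (real (Suc n))" for n
    proof -
      have "real (Suc n) * s \<le> real_of_int \<lceil>real (Suc n) * s\<rceil>" "real_of_int \<lceil>real (Suc n) * s\<rceil> < real (Suc n) * s + 1"
        by linarith+
      then show "s \<le> c n s" "c n s \<le> s + inverse (real (Suc n))"
        unfolding c_def by (simp_all add: field_simps del: of_nat_Suc)
    qed
    have lim: "(\<lambda>n. c n s) \<longlonglongrightarrow> s"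
    proof (rule tendsto_sandwich[of "\<lambda>n. s" _ _ "\<lambda>n. s + inverse (real (Suc n))"])
      show "\<forall>\<^sub>F n in sequentially. s \<le> c n s" using c1 by simp
      show "\<forall>\<^sub>F n in sequentially. c n s \<le> s + inverse (real (Suc n))" using c1 by simp
      show "(\<lambda>n. s) \<longlonglongrightarrow> s" by simp
      show "(\<lambda>n. s + inverse (real (Suc n))) \<longlonglongrightarrow> s"
        using tendsto_add[OF tendsto_const LIMSEQ_inverse_real_of_nat, of s] by simp
    qed
    have "continuous (at s within {s..s+1}) h"
      using rc[of s] by (simp add: continuous_within at_within_Icc_at_right)
    moreover have "c n s \<in> {s..s+1}" for n
    proof -
      have "inverse (real (Suc n)) \<le> 1" by (simp add: inverse_le_1_iff)
      then show ?thesis using c1[of n] by auto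
    qed
    ultimately show ?thesis using lim unfolding continuous_within_sequentially comp_def
      by (auto dest!: spec[of _ "\<lambda>n. c n s"])
  qed
  show ?thesis by (rule borel_measurable_LIMSEQ_real[OF conv meas])
qed

lemma cadlag_local_bound:
  fixes x :: "real \<Rightarrow> real"
  assumes cad: "cadlag_from a x" and z: "a \<le> z"
  shows "\<exists>e>0. \<exists>C. \<forall>s. a \<le> s \<and> \<bar>s - z\<bar> < e \<longrightarrow> \<bar>x s\<bar> \<le> C"
proof -
  have "(x \<longlongrightarrow> x z) (at_right z)" using cad z unfolding cadlag_from_def by auto
  then have "eventually (\<lambda>s. dist (x s) (x z) < 1) (at_right z)" by (rule tendstoD) simp
  then obtain b1 where b1: "b1 > z" "\<And>s. s > z \<Longrightarrow> s < b1 \<Longrightarrow> dist (x s) (x z) < 1"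
    unfolding eventually_at_right_field by auto
  have right: "\<bar>x s\<bar> \<le> \<bar>x z\<bar> + 1" if "z \<le> s" "s < b1" for s
  proof (cases "s = z")
    case True then show ?thesis by simp
  next
    case False then have "dist (x s) (x z) < 1" using b1 that by auto
    then show ?thesis by (simp add: dist_real_def)
  qed
  show ?thesis
  proof (cases "z = a")
    case True
    show ?thesis
      by (rule exI[of _ "b1 - z"], use b1 in simp, rule exI[of _ "\<bar>x z\<bar> + 1"]) (use right True in auto)
  next
    case False
    then have za: "z > a" using z by simp
    then obtain l where "(x \<longlongrightarrow> l) (at_left z)" using cad unfolding cadlag_from_def by auto
    then have "eventually (\<lambda>s. dist (x s) l < 1) (at_left z)" by (rule tendstoD) simp
    then obtain b0 where b0: "b0 < z" "\<And>s. s > b0 \<Longrightarrow> s < z \<Longrightarrow> dist (x s) l < 1"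
      unfolding eventually_at_left_field by auto
    have left: "\<bar>x s\<bar> \<le> \<bar>l\<bar> + 1" if "b0 < s" "s < z" for s
      using b0(2)[OF that] by (simp add: dist_real_def)
    show ?thesis
    proof (intro exI conjI allI impI)
      show "min (b1 - z) (z - b0) > 0" using b0 b1 by simp
      fix s assume s: "a \<le> s \<and> \<bar>s - z\<bar> < min (b1 - z) (z - b0)"
      show "\<bar>x s\<bar> \<le> max (\<bar>x z\<bar> + 1) (\<bar>l\<bar> + 1)"
      proof (cases "s < z")
        case True then show ?thesis using left[of s] s by (auto simp: abs_if split: if_splits)
      next
        case False then show ?thesis using right[of s] s by (auto simp: abs_if split: if_splits)
      qed
    qed
  qed
qed

lemma cadlag_bounded:
  fixes x :: "real \<Rightarrow> real"
  assumes cad: "cadlag_from a x"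
  shows "\<exists>C. \<forall>s\<in>{a..b}. \<bar>x s\<bar> \<le> C"
proof -
  have "\<forall>z\<in>{a..b}. \<exists>e. e > 0 \<and> (\<exists>C. \<forall>s. a \<le> s \<and> \<bar>s - z\<bar> < e \<longrightarrow> \<bar>x s\<bar> \<le> C)"
    using cadlag_local_bound[OF cad] by auto
  then obtain e where e: "\<And>z. z \<in> {a..b} \<Longrightarrow> e z > 0 \<and> (\<exists>C. \<forall>s. a \<le> s \<and> \<bar>s - z\<bar> < e z \<longrightarrow> \<bar>x s\<bar> \<le> C)"
    by metis
  then obtain C where C: "\<And>z. z \<in> {a..b} \<Longrightarrow> \<forall>s. a \<le> s \<and> \<bar>s - z\<bar> < e z \<longrightarrow> \<bar>x s\<bar> \<le> C z"
    by metis
  have cov: "{a..b} \<subseteq> (\<Union>z\<in>{a..b}. ball z (e z))"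
    using e by (auto intro!: bexI simp: dist_real_def)
  obtain D where D: "D \<subseteq> {a..b}" "finite D" "{a..b} \<subseteq> (\<Union>z\<in>D. ball z (e z))"
    by (rule compactE_image[OF compact_Icc _ cov]) auto
  show ?thesis
  proof (intro exI ballI)
    fix s assume s: "s \<in> {a..b}"
    then obtain z where z: "z \<in> D" "s \<in> ball z (e z)" using D by auto
    then have "\<bar>x s\<bar> \<le> C z" using C[of z] D s by (auto simp: dist_real_def abs_minus_commute)
    also have "C z \<le> (\<Sum>w\<in>D. \<bar>C w\<bar>)"
      using z D(2) by (meson abs_ge_self member_le_sum abs_ge_zero order_trans)
    finally show "\<bar>x s\<bar> \<le> (\<Sum>w\<in>D. \<bar>C w\<bar>)" .
  qed
qed

lemma xt_rcont:
  fixes x :: "real \<Rightarrow> real"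
  assumes cad: "cadlag_from a x"
  shows "((\<lambda>s. x (max s a)) \<longlongrightarrow> x (max s0 a)) (at_right s0)"
proof (cases "s0 < a")
  case True
  have "eventually (\<lambda>s. s \<in> {s0<..<a}) (at_right s0)" by (rule eventually_at_right_real[OF True])
  then have "eventually (\<lambda>s. x a = x (max s a)) (at_right s0)" by eventually_elim auto
  moreover have "((\<lambda>s. x a) \<longlongrightarrow> x (max s0 a)) (at_right s0)" using True by simp
  ultimately show ?thesis by (rule Lim_transform_eventually[rotated])
next
  case False
  then have "(x \<longlongrightarrow> x s0) (at_right s0)" using cad unfolding cadlag_from_def by auto
  moreover have "eventually (\<lambda>s. x s = x (max s a)) (at_right s0)"
    using False by (auto simp: eventually_at_right_field intro!: exI[of _ "s0 + 1"])
  ultimately have "((\<lambda>s. x (max s a)) \<longlongrightarrow> x s0) (at_right s0)" by (rule Lim_transform_eventually)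
  then show ?thesis using False by simp
qed

lemma xt_meas:
  fixes x :: "real \<Rightarrow> real"
  assumes cad: "cadlag_from a x"
  shows "(\<lambda>s. x (max s a)) \<in> borel_measurable borel"
  by (rule rcont_borel_measurable) (use xt_rcont[OF cad] in auto)

lemma left_lim_tendsto:
  fixes x :: "real \<Rightarrow> real"
  assumes cad: "cadlag_from a x" and s: "a < s"
  shows "(x \<longlongrightarrow> left_lim x s) (at_left s)"
proof -
  obtain l where l: "(x \<longlongrightarrow> l) (at_left s)" using cad s unfolding cadlag_from_def by auto
  moreover have "left_lim x s = l" unfolding left_lim_def by (rule tendsto_Lim[OF trivial_limit_at_left_real l])
  ultimately show ?thesis by simp
qed

lemma yt_meas:
  fixes x :: "real \<Rightarrow> real"
  assumes cad: "cadlag_from a x"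
  shows "(\<lambda>s. if a < s then left_lim x s else 0) \<in> borel_measurable borel"
proof -
  define u where "u n s = (if a < s then x (max (s - inverse (real (Suc n))) a) else 0)" for n s
  have mx: "(\<lambda>s. x (max s a)) \<in> borel_measurable borel" by (rule xt_meas[OF cad])
  have mu: "u n \<in> borel_measurable borel" for n
  proof -
    have "(\<lambda>s. x (max (s - inverse (real (Suc n))) a)) \<in> borel_measurable borel"
      using measurable_compose[OF _ mx, of "\<lambda>s. s - inverse (real (Suc n))" borel] by simp
    then show ?thesis unfolding u_def by measurable
  qed
  have conv: "(\<lambda>n. u n s) \<longlonglongrightarrow> (if a < s then left_lim x s else 0)" for s
  proof (cases "a < s")
    case True
    have lim: "((\<lambda>s. x (max s a)) \<longlongrightarrow> left_lim x s) (at_left s)"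
    proof -
      have "eventually (\<lambda>y. y \<in> {a<..<s}) (at_left s)" by (rule eventually_at_left_real[OF True])
      then have "eventually (\<lambda>y. x y = x (max y a)) (at_left s)" by eventually_elim auto
      then show ?thesis using left_lim_tendsto[OF cad True] by (rule Lim_transform_eventually[rotated])
    qed
    have f: "filterlim (\<lambda>n. s - inverse (real (Suc n))) (at_left s) sequentially"
    proof (rule tendsto_imp_filterlim_at_left)
      show "(\<lambda>n. s - inverse (real (Suc n))) \<longlonglongrightarrow> s"
        using tendsto_diff[OF tendsto_const LIMSEQ_inverse_real_of_nat, of s] by simp
      show "\<forall>\<^sub>F n in sequentially. s - inverse (real (Suc n)) < s" by simp
    qed
    have "(\<lambda>n. x (max (s - inverse (real (Suc n))) a)) \<longlonglongrightarrow> left_lim x s"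
      using filterlim_compose[OF lim f] by simp
    then show ?thesis using True unfolding u_def by simp
  next
    case False then show ?thesis unfolding u_def by simp
  qed
  show ?thesis by (rule borel_measurable_LIMSEQ_real[OF conv mu])
qed

lemma left_lim_bound:
  fixes x :: "real \<Rightarrow> real"
  assumes cad: "cadlag_from a x" and C: "\<forall>s\<in>{a..b}. \<bar>x s\<bar> \<le> C" and s: "s \<in> {a<..b}"
  shows "\<bar>left_lim x s\<bar> \<le> C"
proof (rule tendsto_upperbound[OF tendsto_rabs[OF left_lim_tendsto[OF cad]]])
  show "a < s" using s by simp
  have "eventually (\<lambda>y. y \<in> {a<..<s}) (at_left s)" by (rule eventually_at_left_real) (use s in simp)
  then show "eventually (\<lambda>y. \<bar>x y\<bar> \<le> C) (at_left s)" by eventually_elim (use C s in auto)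
  show "\<not> trivial_limit (at_left s)" by (rule trivial_limit_at_left_real)
qed




locale kern =
  fixes q :: real and f :: "real \<Rightarrow> real"
  assumes q0: "q \<ge> 0"
    and fnn: "\<forall>u\<in>{-q..0}. f u \<ge> 0"
    and fc: "continuous_on {-q..0} f"
    and fs: "\<forall>u. u \<notin> {-q..0} \<longrightarrow> f u = 0"
begin

definition P where "P v = integral {-q..v} f"
definition Q where "Q v = P (max (-q) (min v 0))"

lemma f_nonneg: "f u \<ge> 0"
  using fnn fs by (cases "u \<in> {-q..0}") auto

lemma f_bounded: "\<exists>B\<ge>0. \<forall>u. \<bar>f u\<bar> \<le> B"
proof -
  have "bounded (f ` {-q..0})" by (rule compact_imp_bounded[OF compact_continuous_image[OF fc compact_Icc]])
  then obtain B where B: "\<forall>y\<in>f ` {-q..0}. norm y \<le> B" by (auto simp: bounded_iff)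
  show ?thesis
  proof (intro exI conjI allI)
    show "0 \<le> max B 0" by simp
    fix u show "\<bar>f u\<bar> \<le> max B 0" using B fs by (cases "u \<in> {-q..0}") force+
  qed
qed

lemma f_meas: "f \<in> borel_measurable borel"
proof -
  have "(\<lambda>x. indicator {-q..0} x *\<^sub>R f x) \<in> borel_measurable borel"
    by (rule borel_measurable_continuous_on_indicator) (auto simp: fc)
  moreover have "(\<lambda>x. indicator {-q..0} x *\<^sub>R f x) = f"
    using fs by (auto simp: fun_eq_iff indicator_def)
  ultimately show ?thesis by simp
qed

lemma f_int: "-q \<le> a \<Longrightarrow> b \<le> 0 \<Longrightarrow> f integrable_on {a..b}"
  by (rule integrable_continuous_real) (rule continuous_on_subset[OF fc], auto)

lemma P_diff: assumes "-q \<le> a" "a \<le> b" "b \<le> 0" shows "P b - P a = integral {a..b} f"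
proof -
  have "integral {-q..a} f + integral {a..b} f = integral {-q..b} f"
    using Henstock_Kurzweil_Integration.integral_combine[of "-q" a b f] assms f_int[of "-q" b] by auto
  then show ?thesis unfolding P_def by simp
qed

lemma P_mono: assumes "-q \<le> a" "a \<le> b" "b \<le> 0" shows "P a \<le> P b"
proof -
  have "integral {a..b} f \<ge> 0"
    by (rule integral_nonneg) (use f_int assms f_nonneg in auto)
  then show ?thesis using P_diff[OF assms] by simp
qed

lemma Q_mono: "a \<le> b \<Longrightarrow> Q a \<le> Q b"
  unfolding Q_def using q0 by (intro P_mono) auto

lemma P_lip: assumes B: "\<forall>u. \<bar>f u\<bar> \<le> B" "B \<ge> 0" and "-q \<le> a" "a \<le> b" "b \<le> 0"
  shows "\<bar>P b - P a\<bar> \<le> B * (b - a)"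
proof -
  have "(f has_integral integral {a..b} f) {a..b}" using f_int assms by (auto intro!: integrable_integral)
  then have "norm (integral {a..b} f) \<le> B * (b - a)"
    using has_integral_bound_real[where S="{}" and B=B and f=f and a=a and b=b] B assms by auto
  then show ?thesis using P_diff[of a b] assms by simp
qed

lemma Q_lip: assumes B: "\<forall>u. \<bar>f u\<bar> \<le> B" "B \<ge> 0"
  shows "\<bar>Q a - Q b\<bar> \<le> B * \<bar>a - b\<bar>"
proof -
  define ca where "ca = max (-q) (min a 0)"
  define cb where "cb = max (-q) (min b 0)"
  have c: "\<bar>ca - cb\<bar> \<le> \<bar>a - b\<bar>" "-q \<le> ca" "ca \<le> 0" "-q \<le> cb" "cb \<le> 0"
    unfolding ca_def cb_def using q0 by (auto simp: abs_if max_def min_def)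
  have "\<bar>P ca - P cb\<bar> \<le> B * \<bar>ca - cb\<bar>"
  proof (cases "ca \<le> cb")
    case True then show ?thesis using P_lip[OF B, of ca cb] c by (simp add: abs_minus_commute)
  next
    case False then show ?thesis using P_lip[OF B, of cb ca] c by simp
  qed
  also have "\<dots> \<le> B * \<bar>a - b\<bar>" using c B by (simp add: mult_left_mono)
  finally show ?thesis unfolding Q_def ca_def cb_def .
qed

lemma Fker_eq: "Fker q f t s = max 0 (Q s - Q (s - t))"
proof -
  define a where "a = max (-q) (s - t)"
  define b where "b = min s 0"
  have F: "Fker q f t s = (LINT u:{a..b}|lborel. f u)" unfolding Fker_def a_def b_def ..
  show ?thesis
  proof (cases "a \<le> b")
    case True
    have ab: "-q \<le> a" "b \<le> 0" unfolding a_def b_def by auto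
    have si: "set_integrable lborel {a..b} f"
      by (rule borel_integrable_atLeastAtMost') (rule continuous_on_subset[OF fc], use ab in auto)
    have "Fker q f t s = integral {a..b} f" using F set_borel_integral_eq_integral(2)[OF si] by simp
    also have "\<dots> = P b - P a" using P_diff[of a b] True ab by simp
    also have "P b = Q s" unfolding Q_def b_def using True ab unfolding a_def b_def by (simp add: max_def min_def)
    also have "P a = Q (s - t)"
    proof -
      have "s - t \<le> 0" using True ab unfolding a_def b_def by linarith
      then show ?thesis unfolding Q_def a_def by (simp add: min_def)
    qed
    finally have 1: "Fker q f t s = Q s - Q (s - t)" .
    have "Q (s - t) \<le> Q s" using P_mono[of a b] True ab \<open>P b = Q s\<close> \<open>P a = Q (s - t)\<close> by simp
    then show ?thesis using 1 by simp
  next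
    case False
    then have "{a..b} = {}" by auto
    then have 1: "Fker q f t s = 0" using F by (simp add: set_lebesgue_integral_def)
    have "max (-q) (min s 0) \<le> max (-q) (min (s - t) 0)"
      using False q0 unfolding a_def b_def by (auto simp: max_def min_def split: if_splits)
    then have "Q s \<le> Q (s - t)" unfolding Q_def by (intro P_mono) (use q0 in auto)
    then show ?thesis using 1 by simp
  qed
qed

lemma Q_deriv: assumes "v \<noteq> -q" "v \<noteq> 0" shows "(Q has_real_derivative f v) (at v)"
proof -
  consider "v < -q" | "v > 0" | "-q < v \<and> v < 0" using assms by linarith
  then show ?thesis
  proof cases
    case 1
    have "((\<lambda>_. Q v) has_real_derivative 0) (at v)" by simp
    then have "(Q has_real_derivative 0) (at v)"
      by (rule has_field_derivative_transform_within_open[where S="{..< -q}"]) (use 1 in \<open>auto simp: Q_def max_def min_def\<close>)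
    then show ?thesis using fs 1 by simp
  next
    case 2
    have "((\<lambda>_. Q v) has_real_derivative 0) (at v)" by simp
    then have "(Q has_real_derivative 0) (at v)"
      by (rule has_field_derivative_transform_within_open[where S="{0<..}"]) (use 2 q0 in \<open>auto simp: Q_def max_def min_def\<close>)
    then show ?thesis using fs 2 by simp
  next
    case 3
    have "(P has_real_derivative f v) (at v within {-q..0})"
      unfolding P_def by (rule integral_has_real_derivative[OF fc]) (use 3 in auto)
    then have "(P has_real_derivative f v) (at v)"
      using at_within_interior[of v "{-q..0}"] 3 by simp
    then show ?thesis
      by (rule has_field_derivative_transform_within_open[where S="{-q<..<0}"]) (use 3 in \<open>auto simp: Q_def max_def min_def\<close>)
  qed
qed

lemma Q_cont: "continuous_on UNIV Q"
proof -
  obtain B where B: "B \<ge> 0" "\<forall>u. \<bar>f u\<bar> \<le> B" using f_bounded by auto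
  have "B-lipschitz_on UNIV Q"
    by (rule lipschitz_onI) (use Q_lip[OF B(2,1)] B in \<open>auto simp: dist_real_def\<close>)
  then show ?thesis by (rule lipschitz_on_continuous_on)
qed

lemma Q_meas: "Q \<in> borel_measurable borel"
  using Q_cont by (simp add: borel_measurable_continuous_onI)

lemma Fker_nonneg: "Fker q f t s \<ge> 0"
  unfolding Fker_eq by simp

lemma Fker_pos: "t \<ge> 0 \<Longrightarrow> Fker q f t s = Q s - Q (s - t)"
  unfolding Fker_eq using Q_mono[of "s - t" s] by simp

lemma Q_left: assumes "s \<le> -q" "t \<ge> 0" shows "Q s - Q (s - t) = 0"
proof -
  have "max (-q) (min s 0) = -q" "max (-q) (min (s - t) 0) = -q" using assms q0 by linarith+
  then show ?thesis unfolding Q_def by simp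
qed

lemma Q_right: assumes "s - t \<ge> 0" "t \<ge> 0" shows "Q s - Q (s - t) = 0"
proof -
  have "max (-q) (min s 0) = 0" "max (-q) (min (s - t) 0) = 0" using assms q0 by linarith+
  then show ?thesis unfolding Q_def by simp
qed

lemma Fker_lip: "\<exists>C. C-lipschitz_on UNIV (\<lambda>(t, s). Fker q f t s)"
proof -
  obtain B where B: "B \<ge> 0" "\<forall>u. \<bar>f u\<bar> \<le> B" using f_bounded by auto
  have QL: "\<bar>Q a - Q b\<bar> \<le> B * \<bar>a - b\<bar>" for a b using Q_lip[OF B(2,1)] .
  show ?thesis
  proof (intro exI lipschitz_onI)
    show "0 \<le> 3 * B" using B by simp
    fix x y :: "real \<times> real"
    obtain t s where x: "x = (t, s)" by fastforce
    obtain t' s' where y: "y = (t', s')" by fastforce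
    have d1: "\<bar>t - t'\<bar> \<le> dist x y" using dist_fst_le[of x y] unfolding x y by (simp add: dist_real_def)
    have d2: "\<bar>s - s'\<bar> \<le> dist x y" using dist_snd_le[of x y] unfolding x y by (simp add: dist_real_def)
    have "\<bar>max 0 (Q s - Q (s - t)) - max 0 (Q s' - Q (s' - t'))\<bar> \<le> \<bar>Q s - Q s'\<bar> + \<bar>Q (s - t) - Q (s' - t')\<bar>"
      by (simp add: max_def abs_if)
    also have "\<dots> \<le> B * \<bar>s - s'\<bar> + B * \<bar>(s - t) - (s' - t')\<bar>" using QL[of s s'] QL[of "s - t" "s' - t'"] by simp
    also have "\<dots> \<le> B * dist x y + B * (2 * dist x y)"
    proof -
      have "\<bar>(s - t) - (s' - t')\<bar> \<le> 2 * dist x y" using d1 d2 by simp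
      then show ?thesis using B d2 by (intro add_mono mult_left_mono) auto
    qed
    finally show "dist ((\<lambda>(t, s). Fker q f t s) x) ((\<lambda>(t, s). Fker q f t s) y) \<le> 3 * B * dist x y"
      unfolding x y by (simp add: Fker_eq dist_real_def algebra_simps)
  qed
qed

end




lemma swap_quot: "(a - b) / (t - x) = (b - a) / (x - (t::real))"
  by (metis minus_diff_eq minus_divide_divide)

lemma meas_nu: "sets \<nu> = sets borel \<Longrightarrow> h \<in> borel_measurable borel \<Longrightarrow> h \<in> borel_measurable \<nu>"
  using measurable_cong_sets[of \<nu> borel borel borel] by simp

lemma integrable_bdd:
  fixes \<nu> :: "real measure" and h :: "real \<Rightarrow> real"
  assumes sets: "sets \<nu> = sets borel" and A: "A \<in> sets borel" "emeasure \<nu> A < \<infinity>"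
    and h: "h \<in> borel_measurable borel" "\<And>s. s \<in> A \<Longrightarrow> \<bar>h s\<bar> \<le> K"
  shows "integrable \<nu> (\<lambda>s. indicator A s * h s)"
proof -
  have "integrable \<nu> (\<lambda>x. indicator A x *\<^sub>R h x)"
    by (rule integrableI_bounded_set_indicator[where B=K]) (use sets A h meas_nu in auto)
  then show ?thesis by simp
qed

lemma integral_bdd:
  fixes \<nu> :: "real measure" and h :: "real \<Rightarrow> real"
  assumes sets: "sets \<nu> = sets borel" and A: "A \<in> sets borel" "emeasure \<nu> A < \<infinity>"
    and h: "h \<in> borel_measurable borel" "\<And>s. s \<in> A \<Longrightarrow> \<bar>h s\<bar> \<le> K"
  shows "\<bar>\<integral>s. indicator A s * h s \<partial>\<nu>\<bar> \<le> K * measure \<nu> A"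
proof -
  have sp: "space \<nu> = UNIV" using sets_eq_imp_space_eq[OF sets] by simp
  have i1: "integrable \<nu> (\<lambda>s. indicator A s * h s)" by (rule integrable_bdd[OF assms])
  have iA: "integrable \<nu> (indicator A :: real \<Rightarrow> real)"
    using A sets sp by (simp add: integrable_indicator_iff)
  have i2: "integrable \<nu> (\<lambda>s. indicator A s * K)" using iA by simp
  have "(\<integral>s. indicator A s * h s \<partial>\<nu>) \<le> (\<integral>s. indicator A s * K \<partial>\<nu>)"
    by (rule integral_mono[OF i1 i2]) (auto simp: indicator_def abs_le_iff dest!: h(2))
  moreover have "-(\<integral>s. indicator A s * h s \<partial>\<nu>) \<le> (\<integral>s. indicator A s * K \<partial>\<nu>)"
  proof -
    have "(\<integral>s. - (indicator A s * h s) \<partial>\<nu>) \<le> (\<integral>s. indicator A s * K \<partial>\<nu>)"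
      by (rule integral_mono) (use i1 i2 in \<open>auto simp: indicator_def abs_le_iff dest!: h(2)\<close>)
    then show ?thesis by simp
  qed
  moreover have "(\<integral>s. indicator A s * K \<partial>\<nu>) = K * measure \<nu> A"
    using sp by simp
  ultimately show ?thesis by linarith
qed

lemma Psi_lip:
  fixes \<nu> :: "real measure" and g Q :: "real \<Rightarrow> real"
  assumes sets: "sets \<nu> = sets borel" and A: "A \<in> sets borel" "emeasure \<nu> A < \<infinity>"
    and g: "g \<in> borel_measurable borel" "\<And>s. s \<in> A \<Longrightarrow> \<bar>g s\<bar> \<le> Cg" "Cg \<ge> 0"
    and Q: "Q \<in> borel_measurable borel" "\<And>a b. \<bar>Q a - Q b\<bar> \<le> B * \<bar>a - b\<bar>" "B \<ge> 0"
  shows "\<bar>(\<integral>s. indicator A s * ((Q s - Q (s - \<tau>)) * g s) \<partial>\<nu>) - (\<integral>s. indicator A s * ((Q s - Q (s - \<tau>')) * g s) \<partial>\<nu>)\<bar>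
     \<le> B * Cg * measure \<nu> A * \<bar>\<tau> - \<tau>'\<bar>"
proof -
  have mQ: "(\<lambda>s. Q (s - c)) \<in> borel_measurable borel" for c
    using measurable_compose[OF _ Q(1), of "\<lambda>s. s - c" borel] by simp
  have int: "integrable \<nu> (\<lambda>s. indicator A s * ((Q s - Q (s - c)) * g s))" for c
  proof (rule integrable_bdd[OF sets A, where K="B * \<bar>c\<bar> * Cg"])
    show "(\<lambda>s. (Q s - Q (s - c)) * g s) \<in> borel_measurable borel" using mQ Q g by measurable
    fix s assume "s \<in> A"
    then show "\<bar>(Q s - Q (s - c)) * g s\<bar> \<le> B * \<bar>c\<bar> * Cg"
      using Q(2)[of s "s - c"] g(2)[of s] g(3) Q(3) by (simp add: abs_mult mult_mono')
  qed
  have "(\<integral>s. indicator A s * ((Q s - Q (s - \<tau>)) * g s) \<partial>\<nu>) - (\<integral>s. indicator A s * ((Q s - Q (s - \<tau>')) * g s) \<partial>\<nu>)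
      = (\<integral>s. indicator A s * ((Q (s - \<tau>') - Q (s - \<tau>)) * g s) \<partial>\<nu>)"
    by (subst Bochner_Integration.integral_diff[OF int int, symmetric]) (rule Bochner_Integration.integral_cong, auto simp: algebra_simps)
  also have "\<bar>\<dots>\<bar> \<le> (B * \<bar>\<tau> - \<tau>'\<bar> * Cg) * measure \<nu> A"
  proof (rule integral_bdd[OF sets A])
    show "(\<lambda>s. (Q (s - \<tau>') - Q (s - \<tau>)) * g s) \<in> borel_measurable borel" using mQ g by measurable
    fix s assume "s \<in> A"
    then show "\<bar>(Q (s - \<tau>') - Q (s - \<tau>)) * g s\<bar> \<le> B * \<bar>\<tau> - \<tau>'\<bar> * Cg"
      using Q(2)[of "s - \<tau>'" "s - \<tau>"] g(2)[of s] g(3) Q(3) by (simp add: abs_mult mult_mono' abs_minus_commute)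
  qed
  finally show ?thesis by (simp add: algebra_simps)
qed

lemma Psi_deriv:
  fixes \<nu> :: "real measure" and g Q f :: "real \<Rightarrow> real"
  assumes sets: "sets \<nu> = sets borel" and A: "A \<in> sets borel" "emeasure \<nu> A < \<infinity>"
    and g: "g \<in> borel_measurable borel" "\<And>s. s \<in> A \<Longrightarrow> \<bar>g s\<bar> \<le> Cg" "Cg \<ge> 0"
    and Q: "Q \<in> borel_measurable borel" "\<And>a b. \<bar>Q a - Q b\<bar> \<le> B * \<bar>a - b\<bar>" "B \<ge> 0"
    and f: "f \<in> borel_measurable borel"
    and D: "AE s in \<nu>. s \<in> A \<longrightarrow> (Q has_real_derivative f (s - t)) (at (s - t))"
  shows "((\<lambda>\<tau>. \<integral>s. indicator A s * ((Q s - Q (s - \<tau>)) * g s) \<partial>\<nu>) has_real_derivative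
           (\<integral>s. indicator A s * (f (s - t) * g s) \<partial>\<nu>)) (at t)"
proof -
  define \<Psi> where "\<Psi> \<tau> = (\<integral>s. indicator A s * ((Q s - Q (s - \<tau>)) * g s) \<partial>\<nu>)" for \<tau>
  have mQ: "(\<lambda>s. Q (s - c)) \<in> borel_measurable borel" for c
    using measurable_compose[OF _ Q(1), of "\<lambda>s. s - c" borel] by simp
  have mf: "(\<lambda>s. f (s - c)) \<in> borel_measurable borel" for c
    using measurable_compose[OF _ f, of "\<lambda>s. s - c" borel] by simp
  have int: "integrable \<nu> (\<lambda>s. indicator A s * ((Q s - Q (s - c)) * g s))" for c
  proof (rule integrable_bdd[OF sets A, where K="B * \<bar>c\<bar> * Cg"])
    show "(\<lambda>s. (Q s - Q (s - c)) * g s) \<in> borel_measurable borel" using mQ Q g by measurable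
    fix s assume "s \<in> A"
    then show "\<bar>(Q s - Q (s - c)) * g s\<bar> \<le> B * \<bar>c\<bar> * Cg"
      using Q(2)[of s "s - c"] g(2)[of s] g(3) Q(3) by (simp add: abs_mult mult_mono')
  qed
  have quot: "(\<Psi> y - \<Psi> t) / (y - t) = (\<integral>s. indicator A s * ((Q (s - t) - Q (s - y)) / (y - t) * g s) \<partial>\<nu>)" for y
  proof -
    have "(\<Psi> y - \<Psi> t) / (y - t) = (\<integral>s. indicator A s * ((Q s - Q (s - y)) * g s) - indicator A s * ((Q s - Q (s - t)) * g s) \<partial>\<nu>) / (y - t)"
      unfolding \<Psi>_def by (subst Bochner_Integration.integral_diff[OF int int]) simp
    also have "\<dots> = (\<integral>s. (indicator A s * ((Q s - Q (s - y)) * g s) - indicator A s * ((Q s - Q (s - t)) * g s)) / (y - t) \<partial>\<nu>)"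
      by simp
    also have "\<dots> = (\<integral>s. indicator A s * ((Q (s - t) - Q (s - y)) / (y - t) * g s) \<partial>\<nu>)"
      by (rule Bochner_Integration.integral_cong) (auto simp: field_simps)
    finally show ?thesis .
  qed
  have "((\<lambda>y. (\<Psi> y - \<Psi> t) / (y - t)) \<longlongrightarrow> (\<integral>s. indicator A s * (f (s - t) * g s) \<partial>\<nu>)) (at t)"
    unfolding tendsto_at_iff_sequentially comp_def
  proof (intro allI impI)
    fix X :: "nat \<Rightarrow> real" assume X: "\<forall>i. X i \<in> UNIV - {t}" and Xt: "X \<longlonglongrightarrow> t"
    have "(\<lambda>i. \<integral>s. indicator A s * ((Q (s - t) - Q (s - X i)) / (X i - t) * g s) \<partial>\<nu>) \<longlonglongrightarrow> (\<integral>s. indicator A s * (f (s - t) * g s) \<partial>\<nu>)"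
    proof (rule integral_dominated_convergence[where w="\<lambda>s. indicator A s * (B * Cg)"])
      show "(\<lambda>s. indicator A s * (f (s - t) * g s)) \<in> borel_measurable \<nu>"
        by (rule meas_nu[OF sets]) (use mf g A in measurable)
      show "(\<lambda>s. indicator A s * ((Q (s - t) - Q (s - X i)) / (X i - t) * g s)) \<in> borel_measurable \<nu>" for i
        by (rule meas_nu[OF sets]) (use mQ g A in measurable)
      show "integrable \<nu> (\<lambda>s. indicator A s * (B * Cg))"
        using integrable_bdd[OF sets A, of "\<lambda>_. B * Cg" "B * Cg"] g Q by simp
      show "AE s in \<nu>. norm (indicator A s * ((Q (s - t) - Q (s - X i)) / (X i - t) * g s)) \<le> indicator A s * (B * Cg)" for i
      proof (intro AE_I2)
        fix s assume "s \<in> space \<nu>"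
        show "norm (indicator A s * ((Q (s - t) - Q (s - X i)) / (X i - t) * g s)) \<le> indicator A s * (B * Cg)"
        proof (cases "s \<in> A")
          case True
          have ne: "X i - t \<noteq> 0" using X by auto
          have "\<bar>(Q (s - t) - Q (s - X i)) / (X i - t)\<bar> \<le> B"
            using Q(2)[of "s - t" "s - X i"] ne by (simp add: divide_le_eq abs_minus_commute abs_divide)
          then have "\<bar>(Q (s - t) - Q (s - X i)) / (X i - t)\<bar> * \<bar>g s\<bar> \<le> B * Cg"
            using True g(2)[of s] g(3) Q(3) by (intro mult_mono) auto
          then show ?thesis using True by (simp add: abs_mult)
        qed simp
      qed
      show "AE s in \<nu>. (\<lambda>i. indicator A s * ((Q (s - t) - Q (s - X i)) / (X i - t) * g s)) \<longlonglongrightarrow> indicator A s * (f (s - t) * g s)"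
        using D
      proof eventually_elim
        case (elim s)
        show ?case
        proof (cases "s \<in> A")
          case True
          then have d: "((\<lambda>z. (Q z - Q (s - t)) / (z - (s - t))) \<longlongrightarrow> f (s - t)) (at (s - t))"
            using elim by (simp add: has_field_derivative_iff)
          have "(\<lambda>i. s - X i) \<longlonglongrightarrow> s - t" by (intro tendsto_intros Xt)
          moreover have "\<forall>i. s - X i \<in> UNIV - {s - t}" using X by auto
          ultimately have "(\<lambda>i. (Q (s - X i) - Q (s - t)) / ((s - X i) - (s - t))) \<longlonglongrightarrow> f (s - t)"
            using d unfolding tendsto_at_iff_sequentially comp_def by (auto dest!: spec[of _ "\<lambda>i. s - X i"])
          moreover have "(Q (s - X i) - Q (s - t)) / ((s - X i) - (s - t)) = (Q (s - t) - Q (s - X i)) / (X i - t)" for i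
          proof -
            have "s - X i - (s - t) = - (X i - t)" by simp
            then show ?thesis using swap_quot by simp
          qed
          ultimately have "(\<lambda>i. (Q (s - t) - Q (s - X i)) / (X i - t)) \<longlonglongrightarrow> f (s - t)" by simp
          then have "(\<lambda>i. (Q (s - t) - Q (s - X i)) / (X i - t) * g s) \<longlonglongrightarrow> f (s - t) * g s"
            by (rule tendsto_mult_right)
          then show ?thesis using True by simp
        qed simp
      qed
    qed
    then show "(\<lambda>i. (\<Psi> (X i) - \<Psi> t) / (X i - t)) \<longlonglongrightarrow> (\<integral>s. indicator A s * (f (s - t) * g s) \<partial>\<nu>)"
      by (simp add: quot)
  qed
  then show ?thesis unfolding \<Psi>_def[symmetric] by (simp add: has_field_derivative_iff)
qed




lemma integral_null:
  assumes "\<And>A. emeasure M A = 0"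
  shows "integral\<^sup>L M (f :: _ \<Rightarrow> real) = 0"
proof -
  have "AE x in M. f x = 0" by (rule AE_I[where N="space M"]) (auto simp: assms)
  then show ?thesis by (rule integral_eq_zero_AE)
qed

lemma pathwise:
  fixes x Sp fm fn :: "real \<Rightarrow> real" and p q r :: real
  assumes p0: "p \<ge> 0" and q0: "q \<ge> 0" and pr: "p \<le> r" and qr: "q \<le> r"
    and Km: "kern p fm" and Kn: "kern q fn"
    and cx: "cadlag_from (-r) x" and cS: "cadlag_from (-r) Sp"
  shows "(\<forall>T\<ge>0. \<exists>C. C-lipschitz_on {0..T}
            (\<lambda>t. (LINT s:{-p..t}|lborel. Fker p fm t s * x s)
               + (LINT s:{-q<..t}|LS_measure (-r) Sp. Fker q fn t s * left_lim x s)))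
       \<and> (AE t in lborel. t \<ge> 0 \<longrightarrow>
           ((\<lambda>t'. (LINT s:{-p..t'}|lborel. Fker p fm t' s * x s)
               + (LINT s:{-q<..t'}|LS_measure (-r) Sp. Fker q fn t' s * left_lim x s))
            has_real_derivative
              ((LINT u:{-p..0}|lborel. fm u * x (t + u))
               + (LINT u:{-q<..0}|LS_measure (-r - t) (\<lambda>u. Sp (t + u)). fn u * left_lim x (t + u))))
            (at t within {0..}))"
proof -
  interpret Km: kern p fm by (rule Km)
  interpret Kn: kern q fn by (rule Kn)
  define G where "G \<tau> = Sp (max \<tau> (-r))" for \<tau>
  define \<nu> where "\<nu> = interval_measure G"
  have nu_eq: "LS_measure (-r) Sp = \<nu>" unfolding LS_measure_def \<nu>_def G_def ..
  have sets: "sets \<nu> = sets borel" unfolding \<nu>_def by simp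
  have Grc: "continuous (at_right a) G" for a
    using xt_rcont[OF cS, of a] unfolding G_def by (simp add: continuous_within)
  have fin: "emeasure \<nu> {a<..b} < \<infinity>" for a b
    unfolding \<nu>_def by (rule interval_measure_Ioc_finite[OF Grc])
  define xt where "xt s = x (max s (-r))" for s
  define yt where "yt s = (if -r < s then left_lim x s else 0)" for s
  have mxt: "xt \<in> borel_measurable borel" unfolding xt_def by (rule xt_meas[OF cx])
  have myt: "yt \<in> borel_measurable borel" unfolding yt_def by (rule yt_meas[OF cx])
  obtain Bm where Bm: "Bm \<ge> 0" "\<forall>u. \<bar>fm u\<bar> \<le> Bm" using Km.f_bounded by auto
  obtain Bn where Bn: "Bn \<ge> 0" "\<forall>u. \<bar>fn u\<bar> \<le> Bn" using Kn.f_bounded by auto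
  have QLm: "\<bar>Km.Q a - Km.Q b\<bar> \<le> Bm * \<bar>a - b\<bar>" for a b using Km.Q_lip[OF Bm(2,1)] .
  have QLn: "\<bar>Kn.Q a - Kn.Q b\<bar> \<le> Bn * \<bar>a - b\<bar>" for a b using Kn.Q_lip[OF Bn(2,1)] .
  have bnd: "\<exists>C\<ge>0. (\<forall>s\<in>{-p..T}. \<bar>xt s\<bar> \<le> C) \<and> (\<forall>s\<in>{-q<..T}. \<bar>yt s\<bar> \<le> C)" for T
  proof -
    obtain C where C: "\<forall>s\<in>{-r..T}. \<bar>x s\<bar> \<le> C" using cadlag_bounded[OF cx] by blast
    show ?thesis
    proof (intro exI conjI ballI)
      show "0 \<le> max C 0" by simp
      fix s assume "s \<in> {-p..T}"
      then have "max s (-r) = s" "s \<in> {-r..T}" using pr by auto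
      then show "\<bar>xt s\<bar> \<le> max C 0" using C unfolding xt_def by (metis max.coboundedI1)
    next
      fix s assume s: "s \<in> {-q<..T}"
      then have "\<bar>left_lim x s\<bar> \<le> C" using left_lim_bound[OF cx C] qr by auto
      then show "\<bar>yt s\<bar> \<le> max C 0" unfolding yt_def by auto
    qed
  qed
  define \<Psi>1 where "\<Psi>1 T t = (\<integral>s. indicator {-p..T} s * ((Km.Q s - Km.Q (s - t)) * xt s) \<partial>lborel)" for T t
  define \<Psi>2 where "\<Psi>2 T t = (\<integral>s. indicator {-q<..T} s * ((Kn.Q s - Kn.Q (s - t)) * yt s) \<partial>\<nu>)" for T t
  define Xi' where "Xi' t = (LINT s:{-p..t}|lborel. Fker p fm t s * x s)
               + (LINT s:{-q<..t}|LS_measure (-r) Sp. Fker q fn t s * left_lim x s)" for t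
  have R: "Xi' t = \<Psi>1 T t + \<Psi>2 T t" if t: "0 \<le> t" "t \<le> T" for t T
  proof -
    have 1: "(LINT s:{-p..t}|lborel. Fker p fm t s * x s) = \<Psi>1 T t"
      unfolding \<Psi>1_def set_lebesgue_integral_def
    proof (rule Bochner_Integration.integral_cong[OF refl])
      fix s
      show "indicator {-p..t} s *\<^sub>R (Fker p fm t s * x s) = indicator {-p..T} s * ((Km.Q s - Km.Q (s - t)) * xt s)"
      proof (cases "s \<in> {-p..t}")
        case True
        then have "max s (-r) = s" using pr by auto
        then show ?thesis using True t Km.Fker_pos[of t s] unfolding xt_def by auto
      next
        case False
        then have "s \<notin> {-p..T} \<or> s - t \<ge> 0" by auto
        then show ?thesis using False Km.Q_right[of s t] t by (auto simp: indicator_def)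
      qed
    qed
    have 2: "(LINT s:{-q<..t}|LS_measure (-r) Sp. Fker q fn t s * left_lim x s) = \<Psi>2 T t"
      unfolding \<Psi>2_def set_lebesgue_integral_def nu_eq
    proof (rule Bochner_Integration.integral_cong[OF refl])
      fix s
      show "indicator {-q<..t} s *\<^sub>R (Fker q fn t s * left_lim x s) = indicator {-q<..T} s * ((Kn.Q s - Kn.Q (s - t)) * yt s)"
      proof (cases "s \<in> {-q<..t}")
        case True
        then show ?thesis using t qr Kn.Fker_pos[of t s] unfolding yt_def by auto
      next
        case False
        then have "s \<notin> {-q<..T} \<or> s - t \<ge> 0" by auto
        then show ?thesis using False Kn.Q_right[of s t] t by (auto simp: indicator_def)
      qed
    qed
    show ?thesis unfolding Xi'_def 1 2 ..
  qed
  have lip: "\<forall>T\<ge>0. \<exists>C. C-lipschitz_on {0..T} Xi'"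
  proof (intro allI impI)
    fix T :: real assume T: "T \<ge> 0"
    obtain C where C: "C \<ge> 0" "\<forall>s\<in>{-p..T}. \<bar>xt s\<bar> \<le> C" "\<forall>s\<in>{-q<..T}. \<bar>yt s\<bar> \<le> C"
      using bnd[of T] by auto
    have l1: "\<bar>\<Psi>1 T \<tau> - \<Psi>1 T \<tau>'\<bar> \<le> Bm * C * measure lborel {-p..T} * \<bar>\<tau> - \<tau>'\<bar>" for \<tau> \<tau>'
      unfolding \<Psi>1_def by (rule Psi_lip[where g=xt]) (use mxt C Bm QLm Km.Q_meas in \<open>auto simp: emeasure_lborel_Icc_eq\<close>)
    have l2: "\<bar>\<Psi>2 T \<tau> - \<Psi>2 T \<tau>'\<bar> \<le> Bn * C * measure \<nu> {-q<..T} * \<bar>\<tau> - \<tau>'\<bar>" for \<tau> \<tau>'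
      unfolding \<Psi>2_def by (rule Psi_lip[where g=yt]) (use sets fin myt C Bn QLn Kn.Q_meas in auto)
    show "\<exists>C. C-lipschitz_on {0..T} Xi'"
    proof (intro exI lipschitz_onI)
      show "0 \<le> Bm * C * measure lborel {-p..T} + Bn * C * measure \<nu> {-q<..T}"
        using Bm Bn C by simp
      fix a b assume a: "a \<in> {0..T}" and b: "b \<in> {0..T}"
      have "dist (Xi' a) (Xi' b) = \<bar>(\<Psi>1 T a - \<Psi>1 T b) + (\<Psi>2 T a - \<Psi>2 T b)\<bar>"
        using R[of a T] R[of b T] a b by (simp add: dist_real_def algebra_simps)
      also have "\<dots> \<le> \<bar>\<Psi>1 T a - \<Psi>1 T b\<bar> + \<bar>\<Psi>2 T a - \<Psi>2 T b\<bar>" by (rule abs_triangle_ineq)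
      also have "\<dots> \<le> (Bm * C * measure lborel {-p..T} + Bn * C * measure \<nu> {-q<..T}) * dist a b"
        using l1[of a b] l2[of a b] by (simp add: dist_real_def algebra_simps)
      finally show "dist (Xi' a) (Xi' b) \<le> (Bm * C * measure lborel {-p..T} + Bn * C * measure \<nu> {-q<..T}) * dist a b" .
    qed
  qed
  define At where "At = {t. emeasure \<nu> {t} \<noteq> 0}"
  have cAt: "countable At" unfolding At_def by (rule countable_atoms[OF sets fin])
  define N where "N = At \<union> (\<lambda>d. d + q) ` At"
  have cN: "countable N" unfolding N_def using cAt by simp
  have "AE t in lborel. t \<notin> N" by (rule AE_not_in[OF countable_imp_null_set_lborel[OF cN]])
  then have der: "AE t in lborel. t \<ge> 0 \<longrightarrow>
           (Xi' has_real_derivative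
              ((LINT u:{-p..0}|lborel. fm u * x (t + u))
               + (LINT u:{-q<..0}|LS_measure (-r - t) (\<lambda>u. Sp (t + u)). fn u * left_lim x (t + u))))
            (at t within {0..})"
  proof eventually_elim
    case (elim t)
    show ?case
    proof
      assume t0: "t \<ge> 0"
      define T where "T = t + 1"
      obtain C where C: "C \<ge> 0" "\<forall>s\<in>{-p..T}. \<bar>xt s\<bar> \<le> C" "\<forall>s\<in>{-q<..T}. \<bar>yt s\<bar> \<le> C"
        using bnd[of T] by auto
      have a0: "emeasure \<nu> {t} = 0" using elim unfolding N_def At_def by auto
      have aq: "emeasure \<nu> {t - q} = 0"
      proof (rule ccontr)
        assume "emeasure \<nu> {t - q} \<noteq> 0"
        then have "t \<in> (\<lambda>d. d + q) ` At" unfolding At_def by (auto intro!: image_eqI[where x="t - q"])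
        then show False using elim unfolding N_def by auto
      qed
      have "AE s in \<nu>. s \<notin> {t}" by (rule AE_not_in) (use a0 sets in auto)
      moreover have "AE s in \<nu>. s \<notin> {t - q}" by (rule AE_not_in) (use aq sets in auto)
      ultimately have AEnu: "AE s in \<nu>. s \<noteq> t \<and> s \<noteq> t - q" by eventually_elim auto
      define D1 where "D1 = (\<integral>s. indicator {-p..T} s * (fm (s - t) * xt s) \<partial>lborel)"
      define D2 where "D2 = (\<integral>s. indicator {-q<..T} s * (fn (s - t) * yt s) \<partial>\<nu>)"
      have d1: "(\<Psi>1 T has_real_derivative D1) (at t)"
        unfolding \<Psi>1_def[abs_def] D1_def
      proof (rule Psi_deriv[where g=xt and Cg=C and B=Bm])
        show "AE s in lborel. s \<in> {-p..T} \<longrightarrow> (Km.Q has_real_derivative fm (s - t)) (at (s - t))"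
          using AE_lborel_singleton[of t] AE_lborel_singleton[of "t - p"]
        proof eventually_elim
          case (elim s)
          then show ?case using Km.Q_deriv[of "s - t"] by auto
        qed
      qed (use mxt C Bm QLm Km.Q_meas Km.f_meas in \<open>auto simp: emeasure_lborel_Icc_eq\<close>)
      have d2: "(\<Psi>2 T has_real_derivative D2) (at t)"
        unfolding \<Psi>2_def[abs_def] D2_def
      proof (rule Psi_deriv[where g=yt and Cg=C and B=Bn])
        show "AE s in \<nu>. s \<in> {-q<..T} \<longrightarrow> (Kn.Q has_real_derivative fn (s - t)) (at (s - t))"
          using AEnu
        proof eventually_elim
          case (elim s)
          then show ?case using Kn.Q_deriv[of "s - t"] by auto
        qed
      qed (use sets fin myt C Bn QLn Kn.Q_meas Kn.f_meas in auto)
      have dsum: "((\<lambda>\<tau>. \<Psi>1 T \<tau> + \<Psi>2 T \<tau>) has_real_derivative D1 + D2) (at t within {0..})"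
        using has_field_derivative_at_within[OF DERIV_add[OF d1 d2]] .
      have dXi: "(Xi' has_real_derivative D1 + D2) (at t within {0..})"
      proof (rule has_field_derivative_transform_within[OF dsum zero_less_one])
        show "t \<in> {0..}" using t0 by simp
        fix y assume "y \<in> {0..}" "dist y t < 1"
        then show "\<Psi>1 T y + \<Psi>2 T y = Xi' y" using R[of y T] unfolding T_def by (auto simp: dist_real_def)
      qed
      have X1: "(LINT u:{-p..0}|lborel. fm u * x (t + u)) = D1"
      proof -
        have "D1 = \<bar>1\<bar> *\<^sub>R (\<integral>u. indicator {-p..T} (t + 1 * u) * (fm (t + 1 * u - t) * xt (t + 1 * u)) \<partial>lborel)"
          unfolding D1_def by (rule lborel_integral_real_affine) simp
        also have "\<dots> = (LINT u:{-p..0}|lborel. fm u * x (t + u))"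
          unfolding set_lebesgue_integral_def
        proof (simp, rule Bochner_Integration.integral_cong[OF refl])
          fix u
          show "indicator {-p..T} (t + u) * (fm u * xt (t + u)) = indicator {-p..0} u * (fm u * x (t + u))"
          proof (cases "u \<in> {-p..0}")
            case True
            then have "t + u \<in> {-p..T}" "max (t + u) (-r) = t + u" using t0 pr unfolding T_def by auto
            then show ?thesis using True unfolding xt_def by simp
          next
            case False then show ?thesis using Km.fs by simp
          qed
        qed
        finally show ?thesis by simp
      qed
      have nut: "LS_measure (-r - t) (\<lambda>u. Sp (t + u)) = interval_measure (\<lambda>u. G (t + u))"
      proof -
        have "(\<lambda>\<tau>. Sp (t + max \<tau> (-r - t))) = (\<lambda>u. G (t + u))"
          unfolding G_def by (rule ext) (simp add: max_def)
        then show ?thesis unfolding LS_measure_def by simp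
      qed
      have X2: "(LINT u:{-q<..0}|LS_measure (-r - t) (\<lambda>u. Sp (t + u)). fn u * left_lim x (t + u)) = D2"
      proof (cases "\<forall>a b. a \<le> b \<longrightarrow> G a \<le> G b")
        case True
        have sh: "interval_measure (\<lambda>u. G (t + u)) = distr \<nu> borel (\<lambda>s. s - t)"
          unfolding \<nu>_def by (rule interval_measure_shift) (use True Grc in auto)
        have m1: "(\<lambda>u. indicator {-q<..0} u * (fn u * yt (t + u))) \<in> borel_measurable borel"
        proof -
          have "(\<lambda>u. yt (t + u)) \<in> borel_measurable borel"
            using measurable_compose[OF _ myt, of "\<lambda>u. t + u" borel] by simp
          then show ?thesis using Kn.f_meas by measurable
        qed
        have "(LINT u:{-q<..0}|LS_measure (-r - t) (\<lambda>u. Sp (t + u)). fn u * left_lim x (t + u))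
            = (\<integral>u. indicator {-q<..0} u * (fn u * yt (t + u)) \<partial>distr \<nu> borel (\<lambda>s. s - t))"
          unfolding nut sh set_lebesgue_integral_def
        proof (rule Bochner_Integration.integral_cong[OF refl])
          fix u
          show "indicator {-q<..0} u *\<^sub>R (fn u * left_lim x (t + u)) = indicator {-q<..0} u * (fn u * yt (t + u))"
          proof (cases "u \<in> {-q<..0}")
            case True
            then have "-r < t + u" using t0 qr by auto
            then show ?thesis using True unfolding yt_def by simp
          qed simp
        qed
        also have "\<dots> = (\<integral>s. indicator {-q<..0} (s - t) * (fn (s - t) * yt (t + (s - t))) \<partial>\<nu>)"
          by (rule integral_distr[OF meas_nu[OF sets] m1]) simp
        also have "\<dots> = D2"
          unfolding D2_def
        proof (rule integral_cong_AE)
          show "(\<lambda>s. indicator {-q<..0} (s - t) * (fn (s - t) * yt (t + (s - t)))) \<in> borel_measurable \<nu>"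
            by (rule meas_nu[OF sets]) (use measurable_compose[OF _ m1, of "\<lambda>s. s - t" borel] in simp)
          show "(\<lambda>s. indicator {-q<..T} s * (fn (s - t) * yt s)) \<in> borel_measurable \<nu>"
          proof (rule meas_nu[OF sets])
            have "(\<lambda>s. fn (s - t)) \<in> borel_measurable borel"
              using measurable_compose[OF _ Kn.f_meas, of "\<lambda>s. s - t" borel] by simp
            then show "(\<lambda>s. indicator {-q<..T} s * (fn (s - t) * yt s)) \<in> borel_measurable borel"
              using myt by measurable
          qed
          show "AE s in \<nu>. indicator {-q<..0} (s - t) * (fn (s - t) * yt (t + (s - t))) = indicator {-q<..T} s * (fn (s - t) * yt s)"
            using AEnu
          proof eventually_elim
            case (elim s)
            show ?case
            proof (cases "s - t \<in> {-q<..0}")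
              case True
              then have "s \<in> {-q<..T}" using t0 unfolding T_def by auto
              then show ?thesis using True by simp
            next
              case False
              then have "s - t \<notin> {-q..0}" using elim by auto
              then show ?thesis using False Kn.fs by simp
            qed
          qed
        qed
        finally show ?thesis .
      next
        case False
        then obtain a b where ab: "a \<le> b" "G b < G a" by force
        have z1: "emeasure \<nu> A = 0" for A unfolding \<nu>_def by (rule interval_measure_nonmono[OF ab])
        have z2: "emeasure (interval_measure (\<lambda>u. G (t + u))) A = 0" for A
          by (rule interval_measure_nonmono[of "a - t" "b - t"]) (use ab in auto)
        have "D2 = 0" unfolding D2_def by (rule integral_null[OF z1])
        moreover have "(LINT u:{-q<..0}|LS_measure (-r - t) (\<lambda>u. Sp (t + u)). fn u * left_lim x (t + u)) = 0"
          unfolding nut set_lebesgue_integral_def using integral_null[OF z2] by simp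
        ultimately show ?thesis by simp
      qed
      show "(Xi' has_real_derivative
              ((LINT u:{-p..0}|lborel. fm u * x (t + u))
               + (LINT u:{-q<..0}|LS_measure (-r - t) (\<lambda>u. Sp (t + u)). fn u * left_lim x (t + u))))
            (at t within {0..})"
        unfolding X1 X2 by (rule dXi)
    qed
  qed
  show ?thesis using lip der unfolding Xi'_def[abs_def] by simp
qed


theorem proposition4p6:
  fixes M :: "'a measure" and F :: "real \<Rightarrow> 'a measure"
    and L S \<Phi> X :: "real \<Rightarrow> 'a \<Rightarrow> real"
    and p q r \<eta> c\<mu> c\<nu> :: real and f\<mu> f\<nu> :: "real \<Rightarrow> real"
  assumes "prob_space M"
    and "p \<ge> 0" and "q \<ge> 0" and "r = max p q" and "r > 0"
    and "filtration_usual M r F"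
    and "levy_process M r F L"
    and "quadratic_variation M r L S"
    and "integrable M (\<lambda>\<omega>. (L 1 \<omega>) ^ 4)"
    and "\<eta> > 0" and "c\<mu> > 0" and "c\<nu> > 0"
    and "\<forall>u\<in>{-p..0}. f\<mu> u \<ge> 0" and "continuous_on {-p..0} f\<mu>" and "\<forall>u. u \<notin> {-p..0} \<longrightarrow> f\<mu> u = 0"
    and "\<forall>u\<in>{-q..0}. f\<nu> u \<ge> 0" and "continuous_on {-q..0} f\<nu>" and "\<forall>u. u \<notin> {-q..0} \<longrightarrow> f\<nu> u = 0"
    and "initial_process M r L \<Phi>"
    and "cdgarch_strong_solution M F p q r \<eta> c\<mu> c\<nu> f\<mu> f\<nu> S \<Phi> X"
  shows "(\<forall>t s. Fker p f\<mu> t s \<ge> 0) \<and> (\<exists>C. C-lipschitz_on UNIV (\<lambda>(t, s). Fker p f\<mu> t s))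
       \<and> (\<forall>t s. Fker q f\<nu> t s \<ge> 0) \<and> (\<exists>C. C-lipschitz_on UNIV (\<lambda>(t, s). Fker q f\<nu> t s))
       \<and> (AE \<omega> in M.
            (\<forall>T\<ge>0. \<exists>C. C-lipschitz_on {0..T} (\<lambda>t. Xi p q r f\<mu> f\<nu> S X t \<omega>))
          \<and> (AE t in lborel. t \<ge> 0 \<longrightarrow>
               ((\<lambda>t'. Xi p q r f\<mu> f\<nu> S X t' \<omega>) has_real_derivative xi p q r f\<mu> f\<nu> S X t \<omega>)
                 (at t within {0..})))"
  proof -
  have pr: "p \<le> r" and qr: "q \<le> r" using assms(4) by auto
  have Km: "kern p f\<mu>" by (unfold_locales) (use assms in auto)
  have Kn: "kern q f\<nu>" by (unfold_locales) (use assms in auto)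
  have a1: "\<forall>t s. Fker p f\<mu> t s \<ge> 0" using kern.Fker_nonneg[OF Km] by blast
  have a2: "\<exists>C. C-lipschitz_on UNIV (\<lambda>(t, s). Fker p f\<mu> t s)" by (rule kern.Fker_lip[OF Km])
  have a3: "\<forall>t s. Fker q f\<nu> t s \<ge> 0" using kern.Fker_nonneg[OF Kn] by blast
  have a4: "\<exists>C. C-lipschitz_on UNIV (\<lambda>(t, s). Fker q f\<nu> t s)" by (rule kern.Fker_lip[OF Kn])
  have b: "AE \<omega> in M.
            (\<forall>T\<ge>0. \<exists>C. C-lipschitz_on {0..T} (\<lambda>t. Xi p q r f\<mu> f\<nu> S X t \<omega>))
          \<and> (AE t in lborel. t \<ge> 0 \<longrightarrow>
               ((\<lambda>t'. Xi p q r f\<mu> f\<nu> S X t' \<omega>) has_real_derivative xi p q r f\<mu> f\<nu> S X t \<omega>)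
                 (at t within {0..}))"
  proof (rule AE_I2)
    fix \<omega> assume \<omega>: "\<omega> \<in> space M"
    have cx: "cadlag_from (-r) (\<lambda>t. X t \<omega>)"
      using assms(20) \<omega> unfolding cdgarch_strong_solution_def by auto
    have cS: "cadlag_from (-r) (\<lambda>t. S t \<omega>)"
      using assms(8) \<omega> unfolding quadratic_variation_def by auto
    show "(\<forall>T\<ge>0. \<exists>C. C-lipschitz_on {0..T} (\<lambda>t. Xi p q r f\<mu> f\<nu> S X t \<omega>))
          \<and> (AE t in lborel. t \<ge> 0 \<longrightarrow>
               ((\<lambda>t'. Xi p q r f\<mu> f\<nu> S X t' \<omega>) has_real_derivative xi p q r f\<mu> f\<nu> S X t \<omega>)
                 (at t within {0..}))"
      using pathwise[OF assms(2,3) pr qr Km Kn cx cS] unfolding Xi_def xi_def by simp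
  qed
  show ?thesis using a1 a2 a3 a4 b by blast
qed

end
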